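(* Let $\mathcal{K}\subset\mathcal{O}_p(\mathcal{L})$ be an ideal of finite multiplicity, and suppose $f\in\mathcal{O}_p(\mathcal{L})$ satisfies $f^n\in\mathcal{K}$ for some integer $n\ge1$. Then $$\operatorname{mult}\mathcal{K}\le n\,\operatorname{mult}\langle\mathcal{K},f\rangle .$$
   Context: $\mathcal{O}_p(\mathcal{L})$ denotes the ring of germs at a point $p$ of holomorphic functions on a two-dimensional complex manifold $\mathcal{L}$ (so $\mathcal{O}_p(\mathcal{L})\cong\mathbb{C}\{x,y\}$). For an ideal $\mathcal{I}\subset\mathcal{O}_p(\mathcal{L})$, $\operatorname{mult}\mathcal{I}=\dim_{\mathbb{C}}\mathcal{O}_p(\mathcal{L})/\mathcal{I}$; finite multiplicity means this dimension is finite. *)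

theory Defs
  imports "HOL-Analysis.Analysis"
begin

text \<open>Local model: a two-dimensional complex manifold near p is C^2 near a point p.
  A function is holomorphic near p if it is complex (Frechet) differentiable,
  i.e. its derivative is C-linear, at every point of an open neighbourhood of p.\<close>

definition holo_near :: "complex \<times> complex \<Rightarrow> (complex \<times> complex \<Rightarrow> complex) \<Rightarrow> bool" where
  "holo_near p f \<longleftrightarrow> (\<exists>U. open U \<and> p \<in> U \<and>
     (\<forall>z\<in>U. \<exists>a b. (f has_derivative (\<lambda>h. a * fst h + b * snd h)) (at z)))"

definition germs :: "complex \<times> complex \<Rightarrow> (complex \<times> complex \<Rightarrow> complex) set" where
  "germs p = {f. holo_near p f}"

definition germ_eq :: "complex \<times> complex \<Rightarrow> (complex \<times> complex \<Rightarrow> complex) \<Rightarrow> (complex \<times> complex \<Rightarrow> complex) \<Rightarrow> bool" where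
  "germ_eq p f g \<longleftrightarrow> (\<forall>\<^sub>F z in nhds p. f z = g z)"

text \<open>An ideal of the germ ring O_p, represented by the set of all representatives
  of its germs (hence closed under germ equality).\<close>
definition germ_ideal :: "complex \<times> complex \<Rightarrow> (complex \<times> complex \<Rightarrow> complex) set \<Rightarrow> bool" where
  "germ_ideal p I \<longleftrightarrow> I \<subseteq> germs p \<and> (\<lambda>z. 0) \<in> I
     \<and> (\<forall>f\<in>I. \<forall>g\<in>I. (\<lambda>z. f z + g z) \<in> I)
     \<and> (\<forall>h\<in>germs p. \<forall>f\<in>I. (\<lambda>z. h z * f z) \<in> I)
     \<and> (\<forall>f\<in>I. \<forall>g\<in>germs p. germ_eq p f g \<longrightarrow> g \<in> I)"

definition gen_ideal :: "complex \<times> complex \<Rightarrow> (complex \<times> complex \<Rightarrow> complex) set \<Rightarrow> (complex \<times> complex \<Rightarrow> complex) \<Rightarrow> (complex \<times> complex \<Rightarrow> complex) set" where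
  "gen_ideal p I f = {g. \<exists>k\<in>I. \<exists>h\<in>germs p. g = (\<lambda>z. k z + h z * f z)}"

definition spans_mod :: "complex \<times> complex \<Rightarrow> (complex \<times> complex \<Rightarrow> complex) set \<Rightarrow> nat \<Rightarrow> (nat \<Rightarrow> complex \<times> complex \<Rightarrow> complex) \<Rightarrow> bool" where
  "spans_mod p I n B \<longleftrightarrow> (\<forall>i<n. B i \<in> germs p) \<and>
     (\<forall>g\<in>germs p. \<exists>c :: nat \<Rightarrow> complex. (\<lambda>z. g z - (\<Sum>i<n. c i * B i z)) \<in> I)"

definition finite_mult :: "complex \<times> complex \<Rightarrow> (complex \<times> complex \<Rightarrow> complex) set \<Rightarrow> bool" where
  "finite_mult p I \<longleftrightarrow> (\<exists>n B. spans_mod p I n B)"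

text \<open>mult I = dim_C (O_p / I) = least size of a spanning family of the quotient.\<close>
definition mult :: "complex \<times> complex \<Rightarrow> (complex \<times> complex \<Rightarrow> complex) set \<Rightarrow> nat" where
  "mult p I = (LEAST n. \<exists>B. spans_mod p I n B)"

end

theory Submission
  imports Defs
begin

lemma holo_const: "holo_near p (\<lambda>z. c)"
  unfolding holo_near_def
proof (intro exI[of _ UNIV] conjI ballI)
  fix z :: "complex \<times> complex"
  have "((\<lambda>z. c) has_derivative (\<lambda>h. 0 * fst h + 0 * snd h)) (at z)"
    using has_derivative_const[of c "at z"] by simp
  then show "\<exists>a b. ((\<lambda>z. c) has_derivative (\<lambda>h. a * fst h + b * snd h)) (at z)" by blast
qed auto

lemma holo_add: assumes "holo_near p f" "holo_near p g" shows "holo_near p (\<lambda>z. f z + g z)"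
proof -
  obtain U where U: "open U" "p \<in> U" "\<forall>z\<in>U. \<exists>a b. (f has_derivative (\<lambda>h. a * fst h + b * snd h)) (at z)"
    using assms(1) unfolding holo_near_def by blast
  obtain V where V: "open V" "p \<in> V" "\<forall>z\<in>V. \<exists>a b. (g has_derivative (\<lambda>h. a * fst h + b * snd h)) (at z)"
    using assms(2) unfolding holo_near_def by blast
  show ?thesis unfolding holo_near_def
  proof (intro exI[of _ "U \<inter> V"] conjI ballI)
    fix z assume z: "z \<in> U \<inter> V"
    then obtain a b c d where 1: "(f has_derivative (\<lambda>h. a * fst h + b * snd h)) (at z)"
      and 2: "(g has_derivative (\<lambda>h. c * fst h + d * snd h)) (at z)" using U V by blast
    have "((\<lambda>z. f z + g z) has_derivative (\<lambda>h. (a * fst h + b * snd h) + (c * fst h + d * snd h))) (at z)"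
      using has_derivative_add[OF 1 2] .
    moreover have "(\<lambda>h. (a * fst h + b * snd h) + (c * fst h + d * snd h)) = (\<lambda>h. (a+c) * fst h + (b+d) * snd h)"
      by (auto simp: algebra_simps)
    ultimately show "\<exists>a b. ((\<lambda>z. f z + g z) has_derivative (\<lambda>h. a * fst h + b * snd h)) (at z)" by metis
  qed (use U V in auto)
qed

lemma holo_mult: assumes "holo_near p f" "holo_near p g" shows "holo_near p (\<lambda>z. f z * g z)"
proof -
  obtain U where U: "open U" "p \<in> U" "\<forall>z\<in>U. \<exists>a b. (f has_derivative (\<lambda>h. a * fst h + b * snd h)) (at z)"
    using assms(1) unfolding holo_near_def by blast
  obtain V where V: "open V" "p \<in> V" "\<forall>z\<in>V. \<exists>a b. (g has_derivative (\<lambda>h. a * fst h + b * snd h)) (at z)"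
    using assms(2) unfolding holo_near_def by blast
  show ?thesis unfolding holo_near_def
  proof (intro exI[of _ "U \<inter> V"] conjI ballI)
    fix z assume z: "z \<in> U \<inter> V"
    then obtain a b c d where 1: "(f has_derivative (\<lambda>h. a * fst h + b * snd h)) (at z)"
      and 2: "(g has_derivative (\<lambda>h. c * fst h + d * snd h)) (at z)" using U V by blast
    have "((\<lambda>z. f z * g z) has_derivative (\<lambda>h. f z * (c * fst h + d * snd h) + (a * fst h + b * snd h) * g z)) (at z)"
      using has_derivative_mult[OF 1 2] .
    moreover have "(\<lambda>h. f z * (c * fst h + d * snd h) + (a * fst h + b * snd h) * g z) = (\<lambda>h. (f z * c + a * g z) * fst h + (f z * d + b * g z) * snd h)"
      by (auto simp: algebra_simps)
    ultimately show "\<exists>a b. ((\<lambda>z. f z * g z) has_derivative (\<lambda>h. a * fst h + b * snd h)) (at z)" by metis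
  qed (use U V in auto)
qed

lemma holo_pow: assumes "holo_near p f" shows "holo_near p (\<lambda>z. f z ^ j)"
proof (induction j)
  case 0 then show ?case using holo_const by simp
next
  case (Suc j) then show ?case using holo_mult[OF assms Suc] by simp
qed

lemma sum_split_nat: fixes a b :: nat and F :: "nat \<Rightarrow> complex" shows "(\<Sum>q<a+b. F q) = (\<Sum>q<a. F q) + (\<Sum>i<b. F (a+i))"
  by (induction b arbitrary: a) (auto simp: add_ac)

theorem mainTheorem2:
  fixes p :: "complex \<times> complex"
    and K :: "(complex \<times> complex \<Rightarrow> complex) set"
    and f :: "complex \<times> complex \<Rightarrow> complex"
    and n :: nat
  assumes "germ_ideal p K" and "finite_mult p K"
    and "f \<in> germs p" and "n \<ge> 1" and "(\<lambda>z. f z ^ n) \<in> K"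
  shows "mult p K \<le> n * mult p (gen_ideal p K f)"
proof -
  note GI = assms(1)[unfolded germ_ideal_def]
  have Kadd: "\<And>a b. a \<in> K \<Longrightarrow> b \<in> K \<Longrightarrow> (\<lambda>z. a z + b z) \<in> K" using GI by blast
  have Kmul: "\<And>h a. h \<in> germs p \<Longrightarrow> a \<in> K \<Longrightarrow> (\<lambda>z. h z * a z) \<in> K" using GI by blast
  have hf: "holo_near p f" using assms(3) by (simp add: germs_def)
  have fpow: "(\<lambda>z. f z ^ j) \<in> germs p" for j using holo_pow[OF hf] by (simp add: germs_def)
  define m where "m = mult p (gen_ideal p K f)"
  obtain n0 B0 where sK: "spans_mod p K n0 B0" using assms(2) unfolding finite_mult_def by blast
  have "spans_mod p (gen_ideal p K f) n0 B0"
  proof -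
    have "\<And>u. u \<in> K \<Longrightarrow> u \<in> gen_ideal p K f"
      unfolding gen_ideal_def
    proof -
      fix u assume "u \<in> K"
      moreover have "(\<lambda>z. 0) \<in> germs p" using holo_const by (simp add: germs_def)
      moreover have "u = (\<lambda>z. u z + 0 * f z)" by simp
      ultimately show "u \<in> {g. \<exists>k\<in>K. \<exists>h\<in>germs p. g = (\<lambda>z. k z + h z * f z)}"
        by (intro CollectI bexI[of _ u] bexI[of _ "\<lambda>z. 0"]) auto
    qed
    then show ?thesis using sK unfolding spans_mod_def by blast
  qed
  then have e0: "Ex (spans_mod p (gen_ideal p K f) n0)" by blast
  have "\<exists>B. spans_mod p (gen_ideal p K f) m B" unfolding m_def mult_def
    using LeastI[of "\<lambda>n. Ex (spans_mod p (gen_ideal p K f) n)" n0, OF e0] by blast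
  then obtain B where sB: "spans_mod p (gen_ideal p K f) m B" by blast
  have Bg: "\<And>i. i < m \<Longrightarrow> B i \<in> germs p" using sB by (simp add: spans_mod_def)
  define E where "E q = (\<lambda>z. f z ^ (q div m) * B (q mod m) z)" for q
  have key: "\<And>g. g \<in> germs p \<Longrightarrow> \<exists>c. \<exists>h\<in>germs p. (\<lambda>z. g z - (\<Sum>q<j*m. c q * E q z) - h z * f z ^ j) \<in> K" for j
  proof (induction j)
    case 0
    have "(\<lambda>z. g z - (\<Sum>q<0*m. 0 * E q z) - g z * f z ^ 0) = (\<lambda>z. 0)" by simp
    then have "(\<lambda>z. g z - (\<Sum>q<0*m. (\<lambda>_. 0) q * E q z) - g z * f z ^ 0) \<in> K" using GI by simp
    then show ?case using 0 by (intro exI[of _ "\<lambda>_. 0"] bexI[of _ g])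
  next
    case (Suc j)
    then obtain c h where h: "h \<in> germs p" and u: "(\<lambda>z. g z - (\<Sum>q<j*m. c q * E q z) - h z * f z ^ j) \<in> K"
      by blast
    obtain d where "(\<lambda>z. h z - (\<Sum>i<m. d i * B i z)) \<in> gen_ideal p K f"
      using sB h unfolding spans_mod_def by blast
    then obtain k h' where k: "k \<in> K" and h': "h' \<in> germs p"
      and eq: "(\<lambda>z. h z - (\<Sum>i<m. d i * B i z)) = (\<lambda>z. k z + h' z * f z)"
      unfolding gen_ideal_def by blast
    define c' where "c' q = (if q < j*m then c q else d (q - j*m))" for q
    have v: "(\<lambda>z. f z ^ j * k z) \<in> K" using Kmul[OF fpow k] .
    have w: "(\<lambda>z. (g z - (\<Sum>q<j*m. c q * E q z) - h z * f z ^ j) + f z ^ j * k z) \<in> K"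
      using Kadd[OF u v] .
    have "(\<lambda>z. g z - (\<Sum>q<Suc j*m. c' q * E q z) - h' z * f z ^ Suc j) =
          (\<lambda>z. (g z - (\<Sum>q<j*m. c q * E q z) - h z * f z ^ j) + f z ^ j * k z)"
    proof
      fix z
      have hz: "h z = (\<Sum>i<m. d i * B i z) + k z + h' z * f z" using fun_cong[OF eq, of z] by (simp add: algebra_simps)
      have s1: "(\<Sum>q<j*m. c' q * E q z) = (\<Sum>q<j*m. c q * E q z)"
        by (rule sum.cong) (auto simp: c'_def)
      have s2: "(\<Sum>i<m. c' (j*m+i) * E (j*m+i) z) = (\<Sum>i<m. d i * (f z ^ j * B i z))"
        by (rule sum.cong) (auto simp: c'_def E_def)
      have "(\<Sum>q<Suc j*m. c' q * E q z) = (\<Sum>q<j*m. c' q * E q z) + (\<Sum>i<m. c' (j*m+i) * E (j*m+i) z)"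
        using sum_split_nat[of "\<lambda>q. c' q * E q z" "j*m" m] by (simp add: add.commute)
      also have "\<dots> = (\<Sum>q<j*m. c q * E q z) + f z ^ j * (\<Sum>i<m. d i * B i z)"
        using s1 s2 by (simp add: sum_distrib_left mult.left_commute)
      finally show "g z - (\<Sum>q<Suc j*m. c' q * E q z) - h' z * f z ^ Suc j =
          (g z - (\<Sum>q<j*m. c q * E q z) - h z * f z ^ j) + f z ^ j * k z"
        unfolding hz by (simp add: ring_distribs)
    qed
    then have "(\<lambda>z. g z - (\<Sum>q<Suc j*m. c' q * E q z) - h' z * f z ^ Suc j) \<in> K" using w by simp
    then show ?case using h' by blast
  qed
  have "spans_mod p K (n*m) E"
    unfolding spans_mod_def
  proof (intro conjI allI impI ballI)
    fix q assume q: "q < n*m"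
    then have "m > 0" by (cases m) auto
    then have "q mod m < m" by simp
    then have "B (q mod m) \<in> germs p" by (rule Bg)
    then show "E q \<in> germs p" using fpow[of "q div m"] holo_mult unfolding E_def germs_def by blast
  next
    fix g assume g: "g \<in> germs p"
    obtain c h where h: "h \<in> germs p" and u: "(\<lambda>z. g z - (\<Sum>q<n*m. c q * E q z) - h z * f z ^ n) \<in> K"
      using key[OF g, of n] by blast
    have "(\<lambda>z. (g z - (\<Sum>q<n*m. c q * E q z) - h z * f z ^ n) + h z * f z ^ n) \<in> K"
      using Kadd[OF u Kmul[OF h assms(5)]] .
    then show "\<exists>c. (\<lambda>z. g z - (\<Sum>i<n * m. c i * E i z)) \<in> K" by auto
  qed
  then have e1: "Ex (spans_mod p K (n*m))" by blast
  have "mult p K \<le> n * m" unfolding mult_def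
    using Least_le[of "\<lambda>n. Ex (spans_mod p K n)" "n*m", OF e1] .
  then show ?thesis unfolding m_def .
qed

end
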